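(* Let $\mu$ be a finite positive Borel measure on $\mathbb{T}$ with $\mu^c\ll\mu$, and let $h = d\mu^c/d\mu$. Let $\mathcal{H}$ be a separable complex Hilbert space and $J$ a conjugation on $\mathcal{H}$. Define $\mathbf{J}^\#$ on $\mathscr{L}^2(\mu,\mathcal{H})$ by $$(\mathbf{J}^\#\mathbf{f})(\xi) = h(\xi)^{1/2} J(\mathbf{f}(\overline{\xi}))\quad\text{for } \mu\text{-a.e. } \xi\in\mathbb{T}.$$ Then (a) $\mathbf{J}^\#$ is a conjugation on $\mathscr{L}^2(\mu,\mathcal{H})$, and (b) $\mathbf{J}^\#\mathbf{M}_\xi\mathbf{J}^\# = \mathbf{M}_\xi$.
   Context: A conjugation is an antilinear, isometric map $C$ with $C^2 = I$. $\mu^c(\Omega) := \mu(\{\overline{\xi}:\xi\in\Omega\})$. $\mathscr{L}^2(\mu,\mathcal{H})$ is the space of (classes of) $\mu$-measurable $\mathcal{H}$-valued functions $\mathbf{f}$ on $\mathbb{T}$ with $\int \|\mathbf{f}(\xi)\|_{\mathcal{H}}^2\,d\mu(\xi)<\infty$, and $(\mathbf{M}_\xi\mathbf{f})(\xi) = \xi\mathbf{f}(\xi)$. (Since $\mu^c\ll\mu$ implies $\mu\ll\mu^c$, $\mathbf{f}(\overline{\xi})$ is well defined $\mu$-a.e.) *)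

theory Defs
  imports "HOL-Analysis.Analysis"
begin

text \<open>The distribution has no class of complex vector spaces, so we introduce complex
  inner product spaces as a type class: a real normed vector space with a complex scalar
  multiplication extending the real one and a complex inner product (antilinear in the
  first argument) inducing the norm. A complex Hilbert space is then a type of this class
  that is also complete.\<close>

class complex_inner = real_normed_vector +
  fixes scaleC :: "complex \<Rightarrow> 'a \<Rightarrow> 'a" (infixr \<open>*\<^sub>C\<close> 75)
    and cinner :: "'a \<Rightarrow> 'a \<Rightarrow> complex"
  assumes scaleC_add_right: "a *\<^sub>C (x + y) = a *\<^sub>C x + a *\<^sub>C y"
    and scaleC_add_left: "(a + b) *\<^sub>C x = a *\<^sub>C x + b *\<^sub>C x"
    and scaleC_scaleC: "a *\<^sub>C (b *\<^sub>C x) = (a * b) *\<^sub>C x"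
    and scaleC_one: "1 *\<^sub>C x = x"
    and scaleR_scaleC: "r *\<^sub>R x = complex_of_real r *\<^sub>C x"
    and cinner_commute: "cinner x y = cnj (cinner y x)"
    and cinner_add_left: "cinner (x + y) z = cinner x z + cinner y z"
    and cinner_scaleC_left: "cinner (a *\<^sub>C x) y = cnj a * cinner x y"
    and cinner_self_norm: "cinner x x = complex_of_real ((norm x)\<^sup>2)"

instantiation complex :: complex_inner
begin
definition scaleC_complex :: "complex \<Rightarrow> complex \<Rightarrow> complex" where
  "scaleC_complex a x = a * x"
definition cinner_complex :: "complex \<Rightarrow> complex \<Rightarrow> complex" where
  "cinner_complex x y = cnj x * y"
instance
proof
  fix a b x y z :: complex and r :: real
  show "a *\<^sub>C (x + y) = a *\<^sub>C x + a *\<^sub>C y" by (simp add: scaleC_complex_def algebra_simps)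
  show "(a + b) *\<^sub>C x = a *\<^sub>C x + b *\<^sub>C x" by (simp add: scaleC_complex_def algebra_simps)
  show "a *\<^sub>C (b *\<^sub>C x) = (a * b) *\<^sub>C x" by (simp add: scaleC_complex_def)
  show "1 *\<^sub>C x = x" by (simp add: scaleC_complex_def)
  show "r *\<^sub>R x = complex_of_real r *\<^sub>C x" by (simp add: scaleC_complex_def scaleR_conv_of_real)
  show "cinner x y = cnj (cinner y x)" by (simp add: cinner_complex_def mult.commute)
  show "cinner (x + y) z = cinner x z + cinner y z" by (simp add: cinner_complex_def algebra_simps)
  show "cinner (a *\<^sub>C x) y = cnj a * cinner x y" by (simp add: cinner_complex_def scaleC_complex_def)
  show "cinner x x = complex_of_real ((norm x)\<^sup>2)" unfolding cinner_complex_def complex_norm_square by (simp add: mult.commute)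
qed
end

definition is_conjugation :: "('h::complex_inner \<Rightarrow> 'h) \<Rightarrow> bool" where
  "is_conjugation C \<longleftrightarrow>
     (\<forall>a b x y. C (a *\<^sub>C x + b *\<^sub>C y) = cnj a *\<^sub>C C x + cnj b *\<^sub>C C y) \<and>
     (\<forall>x. norm (C x) = norm x) \<and>
     (\<forall>x. C (C x) = x)"

text \<open>Elements of L2 are their classes modulo mu-a.e. equality; maps on
  L2 are given by maps on representatives that respect a.e. equality.\<close>

definition L2 :: "complex measure \<Rightarrow> (complex \<Rightarrow> 'h::real_normed_vector) set" where
  "L2 \<mu> = {f. f \<in> borel_measurable \<mu> \<and> integrable \<mu> (\<lambda>x. (norm (f x))\<^sup>2)}"

definition L2_norm :: "complex measure \<Rightarrow> (complex \<Rightarrow> 'h::real_normed_vector) \<Rightarrow> real" where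
  "L2_norm \<mu> f = sqrt (\<integral>x. (norm (f x))\<^sup>2 \<partial>\<mu>)"

definition is_L2_conjugation ::
  "complex measure \<Rightarrow> ((complex \<Rightarrow> 'h::complex_inner) \<Rightarrow> (complex \<Rightarrow> 'h)) \<Rightarrow> bool" where
  "is_L2_conjugation \<mu> C \<longleftrightarrow>
     (\<forall>f \<in> L2 \<mu>. C f \<in> L2 \<mu>) \<and>
     (\<forall>f \<in> L2 \<mu>. \<forall>g \<in> L2 \<mu>. (AE x in \<mu>. f x = g x) \<longrightarrow> (AE x in \<mu>. C f x = C g x)) \<and>
     (\<forall>f \<in> L2 \<mu>. \<forall>g \<in> L2 \<mu>. \<forall>a b.
        AE x in \<mu>. C (\<lambda>y. a *\<^sub>C f y + b *\<^sub>C g y) x = cnj a *\<^sub>C C f x + cnj b *\<^sub>C C g x) \<and>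
     (\<forall>f \<in> L2 \<mu>. L2_norm \<mu> (C f) = L2_norm \<mu> f) \<and>
     (\<forall>f \<in> L2 \<mu>. AE x in \<mu>. C (C f) x = f x)"

text \<open>mu^c(Omega) = mu(conj Omega), i.e. the push-forward of mu under conjugation.\<close>
definition conj_measure :: "complex measure \<Rightarrow> complex measure" where
  "conj_measure \<mu> = distr \<mu> \<mu> cnj"

definition Jsharp ::
  "complex measure \<Rightarrow> ('h::complex_inner \<Rightarrow> 'h) \<Rightarrow> (complex \<Rightarrow> 'h) \<Rightarrow> (complex \<Rightarrow> 'h)" where
  "Jsharp \<mu> J f = (\<lambda>\<xi>. sqrt (enn2real (RN_deriv \<mu> (conj_measure \<mu>) \<xi>)) *\<^sub>R J (f (cnj \<xi>)))"

definition Mxi :: "(complex \<Rightarrow> 'h::complex_inner) \<Rightarrow> (complex \<Rightarrow> 'h)" where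
  "Mxi f = (\<lambda>\<xi>. \<xi> *\<^sub>C f \<xi>)"

end

theory Submission
  imports Defs
begin

lemma scaleC_zero_left' [simp]: "(0::complex) *\<^sub>C (x::'a::complex_inner) = 0"
  using scaleR_scaleC[of 0 x] by simp

lemma scaleC_minus_one': "(-1::complex) *\<^sub>C (x::'a::complex_inner) = - x"
  using scaleR_scaleC[of "-1" x] by simp

lemma scaleR_scaleC_commute': "r *\<^sub>R (a *\<^sub>C (x::'a::complex_inner)) = a *\<^sub>C (r *\<^sub>R x)"
  by (simp add: scaleR_scaleC scaleC_scaleC mult.commute)

lemma scaleR_scaleR_C': "r *\<^sub>R (q *\<^sub>R (x::'a::complex_inner)) = (r * q) *\<^sub>R x"
  by simp

locale conjJ =
  fixes J :: "'h::complex_inner \<Rightarrow> 'h"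
  assumes conjJ: "is_conjugation J"
begin

lemma lin: "J (a *\<^sub>C x + b *\<^sub>C y) = cnj a *\<^sub>C J x + cnj b *\<^sub>C J y"
  using conjJ unfolding is_conjugation_def by blast

lemma norm_J [simp]: "norm (J x) = norm x"
  using conjJ unfolding is_conjugation_def by blast

lemma JJ [simp]: "J (J x) = x"
  using conjJ unfolding is_conjugation_def by blast

lemma J_scaleC: "J (a *\<^sub>C x) = cnj a *\<^sub>C J x"
  using lin[of a x 0 x] by simp

lemma J_add: "J (x + y) = J x + J y"
  using lin[of 1 x 1 y] by (simp add: scaleC_one)

lemma J_scaleR: "J (r *\<^sub>R x) = r *\<^sub>R J x"
  by (simp add: scaleR_scaleC J_scaleC)

lemma J_diff: "J (x - y) = J x - J y"
proof -
  have "x - y = 1 *\<^sub>C x + (-1) *\<^sub>C y" by (simp add: scaleC_one scaleC_minus_one')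
  then show ?thesis using lin[of 1 x "-1" y] by (simp add: scaleC_one scaleC_minus_one')
qed

lemma J_cont: "continuous_on UNIV J"
  unfolding continuous_on_iff
  by (metis J_diff dist_norm norm_J)

lemma J_meas: "J \<in> borel_measurable borel"
  by (rule borel_measurable_continuous_onI[OF J_cont])

end

lemma borel_measurable_scaleR_metric:
  fixes g :: "'a \<Rightarrow> 'b::real_normed_vector"
  assumes f: "f \<in> borel_measurable M" and g: "g \<in> borel_measurable M"
  shows "(\<lambda>x. f x *\<^sub>R g x) \<in> borel_measurable M"
proof (rule borel_measurable_LIMSEQ_metric)
  let ?F = "\<lambda>n x. (real_of_int (floor (f x * 2^n)) / 2^n) *\<^sub>R g x"
  show "?F n \<in> borel_measurable M" for n
  proof -
    have fl: "(\<lambda>x. floor (f x * 2^n)) \<in> measurable M (count_space UNIV)"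
      by (rule measurable_compose[OF _ measurable_real_floor]) (use f in measurable)
    have c: "(\<lambda>x. (real_of_int i / 2^n) *\<^sub>R g x) \<in> borel_measurable M" for i :: int
      by (rule measurable_compose[OF g borel_measurable_continuous_onI]) (intro continuous_intros)
    show ?thesis
      by (rule measurable_compose_countable[where f="\<lambda>i x. (real_of_int i / 2^n) *\<^sub>R g x", OF c fl])
  qed
  fix x
  have lim: "(\<lambda>n. real_of_int (floor (y * 2^n)) / 2^n) \<longlonglongrightarrow> y" for y :: real
  proof (rule tendsto_sandwich[of "\<lambda>n. y - 1 / 2^n" _ _ "\<lambda>n. y"])
    show "\<forall>\<^sub>F n in sequentially. y - 1 / 2 ^ n \<le> real_of_int \<lfloor>y * 2 ^ n\<rfloor> / 2 ^ n"
    proof (intro always_eventually allI)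
      fix n :: nat
      have "y * 2^n - 1 \<le> real_of_int \<lfloor>y * 2 ^ n\<rfloor>" by linarith
      then have "(y * 2^n - 1) / 2^n \<le> real_of_int \<lfloor>y * 2 ^ n\<rfloor> / 2 ^ n"
        by (intro divide_right_mono) auto
      moreover have "y - 1/2^n = (y*2^n - 1)/2^n" by (simp add: field_simps)
      ultimately show "y - 1 / 2 ^ n \<le> real_of_int \<lfloor>y * 2 ^ n\<rfloor> / 2 ^ n"
        by simp
    qed
    show "\<forall>\<^sub>F n in sequentially. real_of_int \<lfloor>y * 2 ^ n\<rfloor> / 2 ^ n \<le> y"
    proof (intro always_eventually allI)
      fix n :: nat
      have "real_of_int \<lfloor>y * 2 ^ n\<rfloor> \<le> y * 2^n" by linarith
      then have "real_of_int \<lfloor>y * 2 ^ n\<rfloor> / 2 ^ n \<le> (y * 2^n) / 2^n"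
        by (intro divide_right_mono) auto
      then show "real_of_int \<lfloor>y * 2 ^ n\<rfloor> / 2 ^ n \<le> y"
        by simp
    qed
    show "(\<lambda>n. y - 1 / 2 ^ n) \<longlonglongrightarrow> y"
      using tendsto_diff[OF tendsto_const LIMSEQ_divide_realpow_zero[of 2 1]] by simp
  qed simp
  show "(\<lambda>i. ?F i x) \<longlonglongrightarrow> f x *\<^sub>R g x"
    by (intro tendsto_scaleR lim tendsto_const)
qed

theorem proposition5p3:
  fixes \<mu> :: "complex measure"
    and J :: "'h::{complex_inner, complete_space} \<Rightarrow> 'h"
  assumes "sets \<mu> = sets (restrict_space borel (sphere (0::complex) 1))"
    and "finite_measure \<mu>"
    and "absolutely_continuous \<mu> (conj_measure \<mu>)"
    and "\<exists>D::'h set. countable D \<and> closure D = UNIV"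
    and "is_conjugation J"
  shows "is_L2_conjugation \<mu> (Jsharp \<mu> J) \<and>
         (\<forall>f \<in> L2 \<mu>. AE \<xi> in \<mu>. Jsharp \<mu> J (Mxi (Jsharp \<mu> J f)) \<xi> = Mxi f \<xi>)"
proof -
  interpret conjJ J using assms(5) by unfold_locales
  interpret finite_measure \<mu> by (rule assms(2))
  define \<nu> where "\<nu> = conj_measure \<mu>"
  define h where "h = RN_deriv \<mu> \<nu>"
  define s where "s = (\<lambda>\<xi>. sqrt (enn2real (h \<xi>)))"
  have Js: "Jsharp \<mu> J f = (\<lambda>\<xi>. s \<xi> *\<^sub>R J (f (cnj \<xi>)))" for f
    by (simp add: Jsharp_def s_def h_def \<nu>_def)
  have cnj_meas: "cnj \<in> measurable \<mu> \<mu>"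
  proof -
    have "cnj \<in> measurable (restrict_space borel (sphere (0::complex) 1)) (restrict_space borel (sphere (0::complex) 1))"
      by (rule measurable_restrict_space3[OF borel_measurable_continuous_onI]) (auto intro: continuous_intros)
    then show ?thesis using measurable_cong_sets[OF assms(1) assms(1)] by simp
  qed
  have sets_\<nu>: "sets \<nu> = sets \<mu>" by (simp add: \<nu>_def conj_measure_def)
  have ac: "absolutely_continuous \<mu> \<nu>" using assms(3) by (simp add: \<nu>_def)
  have fin_\<nu>: "finite_measure \<nu>"
    unfolding \<nu>_def conj_measure_def by (rule finite_measure_distr[OF cnj_meas])
  then interpret nu: finite_measure \<nu> .
  have dens: "density \<mu> h = \<nu>" unfolding h_def by (rule density_RN_deriv[OF ac sets_\<nu>])
  have h_meas[measurable]: "h \<in> borel_measurable \<mu>" unfolding h_def by simp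
  have h_fin: "AE x in \<mu>. h x \<noteq> \<infinity>"
    unfolding h_def by (rule RN_deriv_finite[OF nu.sigma_finite_measure_axioms ac sets_\<nu>])
  have s_meas: "s \<in> borel_measurable \<mu>" unfolding s_def by measurable
  have cnj_meas\<nu>: "cnj \<in> measurable \<nu> \<mu>"
    by (subst measurable_cong_sets[OF sets_\<nu> refl]) (rule cnj_meas)
  have distr2: "distr \<nu> \<mu> cnj = \<mu>"
  proof -
    have "distr \<nu> \<mu> cnj = distr \<mu> \<mu> (cnj \<circ> cnj)"
      unfolding \<nu>_def conj_measure_def by (rule distr_distr[OF cnj_meas cnj_meas])
    also have "cnj \<circ> cnj = (\<lambda>x::complex. x)" by (auto simp: fun_eq_iff)
    finally show ?thesis by (simp add: distr_id)
  qed
  have hc_meas: "(\<lambda>x. h (cnj x)) \<in> borel_measurable \<mu>"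
    by (rule measurable_compose[OF cnj_meas h_meas])
  have dk: "density \<mu> (\<lambda>x. h x * h (cnj x)) = density \<mu> (\<lambda>_. 1)"
  proof -
    have "density \<mu> (\<lambda>x. h x * h (cnj x)) = density (density \<mu> h) (\<lambda>x. h (cnj x))"
      by (rule density_density_eq[symmetric, OF h_meas hc_meas])
    also have "\<dots> = density \<nu> (h \<circ> cnj)" by (simp add: dens comp_def)
    also have "\<dots> = distr (density (distr \<nu> \<mu> cnj) h) \<nu> cnj"
    proof (rule distr_density_distr[symmetric, OF cnj_meas\<nu> _ _ h_meas])
      show "cnj \<in> \<mu> \<rightarrow>\<^sub>M \<nu>"
        by (subst measurable_cong_sets[OF refl sets_\<nu>]) (rule cnj_meas)
    qed simp
    also have "\<dots> = distr \<nu> \<nu> cnj" by (simp add: distr2 dens)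
    also have "\<dots> = \<mu>"
    proof -
      have "distr \<nu> \<nu> cnj = distr \<nu> \<mu> cnj"
        by (rule distr_cong) (auto simp: sets_\<nu>)
      then show ?thesis using distr2 by simp
    qed
    finally show ?thesis by (simp add: density_1)
  qed
  have hk: "AE x in \<mu>. h x * h (cnj x) = 1"
    by (rule density_unique[OF _ _ dk]) (use h_meas hc_meas in auto)
  have sk: "AE x in \<mu>. s x * s (cnj x) = 1"
    using hk
  proof eventually_elim
    case (elim x)
    then have "enn2real (h x) * enn2real (h (cnj x)) = 1"
      by (metis enn2real_1 enn2real_mult)
    then show ?case by (simp add: s_def real_sqrt_mult[symmetric])
  qed
  have AE_cnj: "AE x in \<mu>. P (cnj x)" if "AE x in \<mu>. P x" for P
  proof -
    have "AE x in \<nu>. P x" by (rule absolutely_continuous_AE[OF sets_\<nu> ac that])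
    then show ?thesis unfolding \<nu>_def conj_measure_def by (rule AE_distrD[OF cnj_meas])
  qed
  have nn: "(\<integral>\<^sup>+x. ennreal ((norm (Jsharp \<mu> J f x))\<^sup>2) \<partial>\<mu>) = (\<integral>\<^sup>+x. ennreal ((norm (f x))\<^sup>2) \<partial>\<mu>)"
    if f: "f \<in> borel_measurable \<mu>" for f
  proof -
    have g: "(\<lambda>x. ennreal ((norm (f x))\<^sup>2)) \<in> borel_measurable \<mu>" using f by measurable
    have "(\<integral>\<^sup>+x. ennreal ((norm (Jsharp \<mu> J f x))\<^sup>2) \<partial>\<mu>) = (\<integral>\<^sup>+x. h x * ennreal ((norm (f (cnj x)))\<^sup>2) \<partial>\<mu>)"
    proof (rule nn_integral_cong_AE)
      show "AE x in \<mu>. ennreal ((norm (Jsharp \<mu> J f x))\<^sup>2) = h x * ennreal ((norm (f (cnj x)))\<^sup>2)"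
        using h_fin
      proof eventually_elim
        case (elim x)
        have "(norm (Jsharp \<mu> J f x))\<^sup>2 = enn2real (h x) * (norm (f (cnj x)))\<^sup>2"
          by (simp add: Js s_def power_mult_distrib)
        then show ?case
          using elim by (simp add: ennreal_mult'' ennreal_enn2real_if top.not_eq_extremum)
      qed
    qed
    also have "\<dots> = integral\<^sup>N \<nu> (\<lambda>x. ennreal ((norm (f (cnj x)))\<^sup>2))"
      unfolding h_def
      by (rule RN_deriv_nn_integral[symmetric, OF ac sets_\<nu>])
        (rule measurable_compose[OF cnj_meas g])
    also have "\<dots> = (\<integral>\<^sup>+x. ennreal ((norm (f (cnj (cnj x))))\<^sup>2) \<partial>\<mu>)"
      unfolding \<nu>_def conj_measure_def
      by (rule nn_integral_distr[OF cnj_meas])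
        (subst measurable_cong_sets[OF sets_distr refl], rule measurable_compose[OF cnj_meas g])
    finally show ?thesis by simp
  qed
  have L2_J: "Jsharp \<mu> J f \<in> L2 \<mu> \<and> L2_norm \<mu> (Jsharp \<mu> J f) = L2_norm \<mu> f" if f: "f \<in> L2 \<mu>" for f
  proof -
    have fm: "f \<in> borel_measurable \<mu>" and fi: "integrable \<mu> (\<lambda>x. (norm (f x))\<^sup>2)"
      using f by (auto simp: L2_def)
    have "(\<lambda>x. J (f (cnj x))) \<in> borel_measurable \<mu>"
      by (rule measurable_compose[OF measurable_compose[OF cnj_meas fm] J_meas])
    then have jm: "Jsharp \<mu> J f \<in> borel_measurable \<mu>"
      unfolding Js by (rule borel_measurable_scaleR_metric[OF s_meas])
    have nm: "(\<lambda>x. (norm (Jsharp \<mu> J f x))\<^sup>2) \<in> borel_measurable \<mu>" using jm by measurable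
    have fe: "(\<integral>\<^sup>+x. ennreal ((norm (f x))\<^sup>2) \<partial>\<mu>) = ennreal (\<integral>x. (norm (f x))\<^sup>2 \<partial>\<mu>)"
      by (rule nn_integral_eq_integral[OF fi]) simp
    have ji: "integrable \<mu> (\<lambda>x. (norm (Jsharp \<mu> J f x))\<^sup>2)"
      by (rule integrableI_nn_integral_finite[OF nm]) (use nn[OF fm] fe in auto)
    have "(\<integral>x. (norm (Jsharp \<mu> J f x))\<^sup>2 \<partial>\<mu>) = (\<integral>x. (norm (f x))\<^sup>2 \<partial>\<mu>)"
      using integral_eq_nn_integral[OF nm] integral_eq_nn_integral[of "\<lambda>x. (norm (f x))\<^sup>2"] nn[OF fm] fm
      by simp
    then show ?thesis using jm ji by (simp add: L2_def L2_norm_def)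
  qed
  have P1: "\<forall>f \<in> L2 \<mu>. Jsharp \<mu> J f \<in> L2 \<mu>" using L2_J by blast
  have P2: "\<forall>f \<in> L2 \<mu>. \<forall>g \<in> L2 \<mu>. (AE x in \<mu>. f x = g x) \<longrightarrow> (AE x in \<mu>. Jsharp \<mu> J f x = Jsharp \<mu> J g x)"
  proof (intro ballI impI)
    fix f g :: "complex \<Rightarrow> 'h" assume "AE x in \<mu>. f x = g x"
    from AE_cnj[OF this] show "AE x in \<mu>. Jsharp \<mu> J f x = Jsharp \<mu> J g x"
      by eventually_elim (simp add: Js)
  qed
  have P3: "\<forall>f \<in> L2 \<mu>. \<forall>g \<in> L2 \<mu>. \<forall>a b.
        AE x in \<mu>. Jsharp \<mu> J (\<lambda>y. a *\<^sub>C f y + b *\<^sub>C g y) x = cnj a *\<^sub>C Jsharp \<mu> J f x + cnj b *\<^sub>C Jsharp \<mu> J g x"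
    by (intro ballI allI AE_I2) (simp add: Js lin scaleR_add_right scaleR_scaleC_commute')
  have P4: "\<forall>f \<in> L2 \<mu>. L2_norm \<mu> (Jsharp \<mu> J f) = L2_norm \<mu> f" using L2_J by blast
  have P5: "\<forall>f \<in> L2 \<mu>. AE x in \<mu>. Jsharp \<mu> J (Jsharp \<mu> J f) x = f x"
  proof (intro ballI)
    fix f :: "complex \<Rightarrow> 'h" show "AE x in \<mu>. Jsharp \<mu> J (Jsharp \<mu> J f) x = f x"
      using sk by eventually_elim (simp add: Js J_scaleR)
  qed
  have P6: "\<forall>f \<in> L2 \<mu>. AE \<xi> in \<mu>. Jsharp \<mu> J (Mxi (Jsharp \<mu> J f)) \<xi> = Mxi f \<xi>"
  proof (intro ballI)
    fix f :: "complex \<Rightarrow> 'h" show "AE x in \<mu>. Jsharp \<mu> J (Mxi (Jsharp \<mu> J f)) x = Mxi f x"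
      using sk by eventually_elim (simp add: Js Mxi_def J_scaleR J_scaleC scaleR_scaleC_commute')
  qed
  show ?thesis using P1 P2 P3 P4 P5 P6 unfolding is_L2_conjugation_def by blast
qed

end
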